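(* Let $G$ be a mixed abelian group in which every subgroup is an essential subgroup of some direct summand of $G$. Then the torsion subgroup of $G$ is divisible.
   Context: All groups are additively written abelian groups; a mixed group contains both non-zero elements of finite order and elements of infinite order. A subgroup $H$ of a group $A$ is essential in $A$ if $H \cap S \neq \{0\}$ for every non-zero subgroup $S$ of $A$. *)

theory Defs
  imports Main
begin

text \<open>Abelian groups are modelled by the type class ab_group_add: the group G
is the whole type 'a (written additively).\<close>

primrec nmul :: "nat \<Rightarrow> 'a::ab_group_add \<Rightarrow> 'a" where
  "nmul 0 x = 0"
| "nmul (Suc n) x = x + nmul n x"

definition subgrp :: "'a::ab_group_add set \<Rightarrow> bool" where
  "subgrp H \<longleftrightarrow> 0 \<in> H \<and> (\<forall>x\<in>H. \<forall>y\<in>H. x + y \<in> H) \<and> (\<forall>x\<in>H. - x \<in> H)"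

definition finite_order :: "'a::ab_group_add \<Rightarrow> bool" where
  "finite_order x \<longleftrightarrow> (\<exists>n>0. nmul n x = 0)"

definition mixed_group :: "'a::ab_group_add itself \<Rightarrow> bool" where
  "mixed_group _ \<longleftrightarrow> (\<exists>x::'a. x \<noteq> 0 \<and> finite_order x) \<and> (\<exists>y::'a. \<not> finite_order y)"

definition torsion_part :: "'a::ab_group_add set" where
  "torsion_part = {x. finite_order x}"

definition direct_summand :: "'a::ab_group_add set \<Rightarrow> bool" where
  "direct_summand D \<longleftrightarrow> subgrp D \<and>
     (\<exists>E. subgrp E \<and> D \<inter> E = {0} \<and> (\<forall>z. \<exists>d\<in>D. \<exists>e\<in>E. z = d + e))"

definition essential_in :: "'a::ab_group_add set \<Rightarrow> 'a set \<Rightarrow> bool" where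
  "essential_in H D \<longleftrightarrow> subgrp H \<and> subgrp D \<and> H \<subseteq> D \<and>
     (\<forall>S. subgrp S \<and> S \<subseteq> D \<and> S \<noteq> {0} \<longrightarrow> H \<inter> S \<noteq> {0})"

definition divisible_set :: "'a::ab_group_add set \<Rightarrow> bool" where
  "divisible_set T \<longleftrightarrow> (\<forall>x\<in>T. \<forall>n>0. \<exists>y\<in>T. nmul n y = x)"

end

theory Submission
  imports Defs
begin

lemma nmul_add_n: "nmul (m + k) x = nmul m x + nmul k (x::'a::ab_group_add)"
  by (induction m) (simp_all add: add.assoc)

lemma nmul_distrib: "nmul k (x + y) = nmul k x + nmul k (y::'a::ab_group_add)"
  by (induction k) (simp_all add: algebra_simps)

lemma nmul_zero[simp]: "nmul k (0::'a::ab_group_add) = 0"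
  by (induction k) simp_all

lemma nmul_neg: "nmul k (- x) = - nmul k (x::'a::ab_group_add)"
  by (induction k) (simp_all add: algebra_simps)

lemma nmul_mult: "nmul (m * k) x = nmul m (nmul k (x::'a::ab_group_add))"
  by (induction m) (simp_all add: nmul_add_n nmul_distrib)

lemma nmul_sub: "nmul k (x - y) = nmul k x - nmul k (y::'a::ab_group_add)"
  using nmul_distrib[of k x "-y"] nmul_neg[of k y] by simp

lemma nmul_subgrp: "subgrp D \<Longrightarrow> x \<in> D \<Longrightarrow> nmul k x \<in> D"
  by (induction k) (auto simp: subgrp_def)

lemma subgrp_diff: "subgrp D \<Longrightarrow> x \<in> D \<Longrightarrow> y \<in> D \<Longrightarrow> x - y \<in> D"
  unfolding subgrp_def by (metis diff_conv_add_uminus)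

lemma fo_neg: "finite_order (- x) \<longleftrightarrow> finite_order (x::'a::ab_group_add)"
  unfolding finite_order_def by (metis nmul_neg neg_equal_0_iff_equal)

lemma fo_add: assumes "finite_order x" "finite_order (y::'a::ab_group_add)"
  shows "finite_order (x + y)"
proof -
  obtain a where a: "a > 0" "nmul a x = 0" using assms(1) finite_order_def by blast
  obtain b where b: "b > 0" "nmul b y = 0" using assms(2) finite_order_def by blast
  have "nmul (b * a) (x + y) = 0"
    by (simp add: nmul_distrib nmul_mult a b) (metis mult.commute nmul_mult b(2) nmul_zero)
  then show ?thesis unfolding finite_order_def using a b by (metis mult_pos_pos)
qed

lemma fo_zero: "finite_order (0::'a::ab_group_add)"
  unfolding finite_order_def by (rule exI[of _ 1]) simp

theorem lemma2p15:
  assumes "mixed_group TYPE('a::ab_group_add)"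
    and "\<And>H::'a set. subgrp H \<Longrightarrow> \<exists>D. direct_summand D \<and> essential_in H D"
  shows "divisible_set (torsion_part :: 'a set)"
  unfolding divisible_set_def torsion_part_def
proof (intro ballI allI impI)
  fix t :: 'a and n :: nat
  assume "t \<in> {x. finite_order x}" and n: "n > 0"
  then have tfo: "finite_order t" by simp
  obtain m where m: "m > 0" "nmul m t = 0" using tfo finite_order_def by blast
  obtain x :: 'a where x: "\<not> finite_order x" using assms(1) mixed_group_def by blast
  define w where "w = nmul n x + t"
  have winf: "nmul j w \<noteq> 0" if "j > 0" for j
  proof
    assume "nmul j w = 0"
    then have "nmul (m * j) w = 0" by (simp add: nmul_mult)
    moreover have "nmul (m * j) w = nmul (m * j * n) x"
      unfolding w_def nmul_distrib
      by (metis add.right_neutral m(2) mult.commute nmul_mult nmul_zero)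
    ultimately show False using x m n that unfolding finite_order_def by (metis mult_pos_pos)
  qed
  have pos_fo: "z = 0" if zk: "z = nmul k w" "finite_order z" for z k
  proof (cases "k = 0")
    case True then show ?thesis using zk by simp
  next
    case False
    obtain j where j: "j > 0" "nmul j z = 0" using zk(2) finite_order_def by blast
    then have "nmul (j * k) w = 0" using zk(1) nmul_mult by metis
    moreover have "j * k > 0" using j False by simp
    ultimately show ?thesis using winf by blast
  qed
  define H where "H = {nmul a w - nmul b w | a b. True}"
  have Hsub: "subgrp H"
    unfolding subgrp_def H_def
  proof (intro conjI ballI)
    show "0 \<in> {nmul a w - nmul b w |a b. True}" by (rule CollectI, rule exI[of _ 0], rule exI[of _ 0], simp)
  next
    fix u v assume "u \<in> {nmul a w - nmul b w |a b. True}" "v \<in> {nmul a w - nmul b w |a b. True}"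
    then obtain a b c d where "u = nmul a w - nmul b w" "v = nmul c w - nmul d w" by blast
    then have "u + v = nmul (a + c) w - nmul (b + d) w" by (simp add: nmul_add_n algebra_simps)
    then show "u + v \<in> {nmul a w - nmul b w |a b. True}" by blast
  next
    fix u assume "u \<in> {nmul a w - nmul b w |a b. True}"
    then obtain a b where "u = nmul a w - nmul b w" by blast
    then have "- u = nmul b w - nmul a w" by simp
    then show "- u \<in> {nmul a w - nmul b w |a b. True}" by blast
  qed
  have Htf: "z = 0" if zH: "z \<in> H" "finite_order z" for z
  proof -
    obtain a b where ab: "z = nmul a w - nmul b w" using zH H_def by blast
    show ?thesis
    proof (cases "a \<ge> b")
      case True
      then have "z = nmul (a - b) w" using ab nmul_add_n[of "a-b" b w] by simp
      then show ?thesis using pos_fo zH(2) by blast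
    next
      case False
      then have "- z = nmul (b - a) w" using ab nmul_add_n[of "b-a" a w] by simp
      moreover have "finite_order (- z)" using zH fo_neg by blast
      ultimately have "- z = 0" by (rule pos_fo)
      then show ?thesis by simp
    qed
  qed
  obtain D where D: "direct_summand D" "essential_in H D" using assms(2) Hsub by blast
  obtain E where E: "subgrp E" "D \<inter> E = {0}" "\<forall>z. \<exists>d\<in>D. \<exists>e\<in>E. z = d + e"
    using D(1) unfolding direct_summand_def by blast
  have Dsub: "subgrp D" using D(1) direct_summand_def by blast
  have "w \<in> H" unfolding H_def by (rule CollectI, rule exI[of _ 1], rule exI[of _ 0], simp)
  then have wD: "w \<in> D" using D(2) essential_in_def by blast
  have DT: "z = 0" if "z \<in> D" "finite_order z" for z
  proof (rule ccontr)
    assume nz: "z \<noteq> 0"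
    define S where "S = {u. u \<in> D \<and> finite_order u}"
    have "subgrp S" unfolding S_def subgrp_def
    proof (intro conjI ballI)
      show "0 \<in> {u \<in> D. finite_order u}" using Dsub fo_zero subgrp_def by blast
    next
      fix a b assume "a \<in> {u \<in> D. finite_order u}" "b \<in> {u \<in> D. finite_order u}"
      then have "a \<in> D" "b \<in> D" "finite_order a" "finite_order b" by auto
      then show "a + b \<in> {u \<in> D. finite_order u}" using Dsub fo_add[of a b] unfolding subgrp_def by simp
    next
      fix a assume "a \<in> {u \<in> D. finite_order u}"
      then have "a \<in> D" "finite_order a" by auto
      then show "- a \<in> {u \<in> D. finite_order u}" using Dsub fo_neg[of a] unfolding subgrp_def by simp
    qed
    moreover have "S \<subseteq> D" "S \<noteq> {0}" using that nz S_def by auto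
    ultimately have "H \<inter> S \<noteq> {0}" using D(2) essential_in_def by blast
    moreover have "0 \<in> H \<inter> S" using Hsub \<open>subgrp S\<close> subgrp_def by blast
    ultimately obtain u where "u \<in> H" "u \<in> S" "u \<noteq> 0" by blast
    then show False using Htf S_def by blast
  qed
  have uniq: "a = 0" if "a \<in> D" "a \<in> E" for a using that E(2) by blast
  obtain d e where de: "d \<in> D" "e \<in> E" "x = d + e" using E(3) by blast
  obtain d' e' where de': "d' \<in> D" "e' \<in> E" "t = d' + e'" using E(3) by blast
  have "nmul m d' + nmul m e' = 0" using m(2) de'(3) nmul_distrib[of m d' e'] by simp
  then have "nmul m d' = - nmul m e'" by (simp add: eq_neg_iff_add_eq_0)
  moreover have "nmul m d' \<in> D" using de'(1) Dsub nmul_subgrp by blast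
  moreover have "- nmul m e' \<in> E" using de'(2) E(1) nmul_subgrp[of E e' m] unfolding subgrp_def by blast
  ultimately have "nmul m d' = 0" using uniq by metis
  then have d'0: "d' = 0" using DT de' m unfolding finite_order_def by blast
  have "nmul n e + e' = w - nmul n d - d'" unfolding w_def de de' nmul_distrib by (simp add: algebra_simps)
  moreover have "w - nmul n d - d' \<in> D" using subgrp_diff[OF Dsub subgrp_diff[OF Dsub wD nmul_subgrp[OF Dsub de(1)]] de'(1)] .
  moreover have "nmul n e + e' \<in> E" using nmul_subgrp[OF E(1) de(2), of n] de'(2) E(1) unfolding subgrp_def by blast
  ultimately have "nmul n e + e' = 0" using uniq by metis
  then have "e' = - nmul n e" by (simp add: eq_neg_iff_add_eq_0 add.commute)
  then have te: "t = nmul n (- e)" using d'0 de'(3) nmul_neg[of n e] by simp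
  have "finite_order t" by (rule tfo)
  have "nmul (m * n) (- e) = 0" by (simp add: nmul_mult te[symmetric] m(2))
  then have "finite_order (- e)" unfolding finite_order_def using m n by (metis mult_pos_pos)
  then show "\<exists>y\<in>{x. finite_order x}. nmul n y = t" using te by blast
qed

end
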